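(* Let $0<c_1,c_2<1$ and $0<\eta\le 1$ be constants and let $m$ be a sufficiently large integer. Let $H(X,Y,Z)$ be a $3$-partite $3$-uniform hypergraph with $|X|=|Y|=c_1 m$ and $|Z|\geq c_2 2^{m^2}$. If $d_3(Z,(X\times Y))\geq\eta$, then there exists a complete $3$-partite $3$-uniform hypergraph $H'(X',Y',Z')$ that is a subhypergraph of $H$, with $X'\subseteq X$, $Y'\subseteq Y$, $Z'\subseteq Z$ and $|X'|=|Y'|=|Z'|\geq \frac{\eta}{4}\log|X|$.
   Context: A $3$-partite $3$-uniform hypergraph $H(X,Y,Z)$ has vertex set partitioned into $X,Y,Z$ and every edge contains exactly one vertex from each part. $d_3(Z,(X\times Y))$ is the number of edges of $H$ divided by $|X||Y||Z|$. A complete $3$-partite $3$-graph $H'(X',Y',Z')$ contains all triples with one vertex in each of $X',Y',Z'$. $\log$ is base $2$. *)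

theory Defs
  imports Complex_Main
begin

definition tripartite3 :: "'a set \<Rightarrow> 'b set \<Rightarrow> 'c set \<Rightarrow> ('a \<times> 'b \<times> 'c) set \<Rightarrow> bool" where
  "tripartite3 X Y Z E \<longleftrightarrow> finite X \<and> finite Y \<and> finite Z \<and> E \<subseteq> X \<times> Y \<times> Z"

definition d3 :: "'a set \<Rightarrow> 'b set \<Rightarrow> 'c set \<Rightarrow> ('a \<times> 'b \<times> 'c) set \<Rightarrow> real" where
  "d3 X Y Z E = real (card E) / (real (card X) * real (card Y) * real (card Z))"

definition complete_sub :: "'a set \<Rightarrow> 'b set \<Rightarrow> 'c set \<Rightarrow> ('a \<times> 'b \<times> 'c) set \<Rightarrow> bool" where
  "complete_sub X' Y' Z' E \<longleftrightarrow> X' \<times> Y' \<times> Z' \<subseteq> E"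

end

theory Submission
  imports Defs "HOL-Real_Asymp.Real_Asymp"
begin


lemma binom_ratio:
  assumes "t \<le> k" "k \<le> n" "0 < n"
  shows "((real k - real t)/real n)^t * real (n choose t) \<le> real (k choose t)"
proof -
  have "((real k - real t)/real n)^t * real (n choose t)
      = (\<Prod>i=0..<t. (real k - real t)/real n * (real (n - i) / real (t - i)))"
    unfolding binomial_altdef_of_nat[OF assms(1) [THEN order_trans, OF assms(2)]]
    by (simp only: prod.distrib prod_constant card_atLeastLessThan diff_zero)
  also have "\<dots> \<le> (\<Prod>i=0..<t. real (k - i) / real (t - i))"
  proof (rule prod_mono)
    fix i assume i: "i \<in> {0..<t}"
    have ni: "real (n - i) = real n - i" "real (k - i) = real k - i" using i assms by auto
    have a: "(real k - real t)/real n * (real n - i) \<le> real k - i"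
    proof -
      have "(real k - real t)/real n * (real n - i) \<le> (real k - real t)/real n * real n"
        using assms i by (intro mult_left_mono) auto
      also have "\<dots> = real k - real t" using assms by simp
      finally show ?thesis using i by simp
    qed
    have b: "0 \<le> (real k - real t)/real n * (real n - i)" using assms i by auto
    have eq: "(real k - real t)/real n * (real (n - i) / real (t - i))
        = ((real k - real t)/real n * (real n - i)) / real (t - i)" using ni by simp
    have "((real k - real t)/real n * (real n - i)) / real (t - i) \<le> (real k - i) / real (t - i)"
      using a by (rule divide_right_mono) simp
    moreover have "0 \<le> ((real k - real t)/real n * (real n - i)) / real (t - i)"
      using b by (rule divide_nonneg_nonneg) simp
    ultimately show "0 \<le> (real k - real t)/real n * (real (n - i) / real (t - i)) \<and>
          (real k - real t)/real n * (real (n - i) / real (t - i)) \<le> real (k - i) / real (t - i)"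
      unfolding eq ni by simp
  qed
  also have "\<dots> = real (k choose t)" by (rule binomial_altdef_of_nat[OF assms(1), symmetric])
  finally show ?thesis .
qed

lemma dense_part:
  fixes g :: "'a \<Rightarrow> real"
  assumes "finite A" "\<And>a. a\<in>A \<Longrightarrow> g a \<le> M" "0 \<le> \<theta>" "0 < M"
    "\<theta> * M * card A \<le> (\<Sum>a\<in>A. g a)"
  shows "\<theta>/2 * card A \<le> card {a\<in>A. \<theta>/2*M \<le> g a}"
proof -
  define P where "P a = (\<theta>/2*M \<le> g a)" for a
  have "(\<Sum>a\<in>A. g a) = (\<Sum>a\<in>A. if P a then g a else 0) + (\<Sum>a\<in>A. if P a then 0 else g a)"
    by (rule trans[OF _ sum.distrib]) (rule sum.cong, auto)
  also have "\<dots> = (\<Sum>a\<in>{a\<in>A. P a}. g a) + (\<Sum>a\<in>{a\<in>A. \<not> P a}. g a)"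
  proof -
    have "(\<Sum>a\<in>{a\<in>A. \<not> P a}. g a) = (\<Sum>a\<in>A. if \<not> P a then g a else 0)"
      using assms(1) by (rule sum.inter_filter)
    also have "\<dots> = (\<Sum>a\<in>A. if P a then 0 else g a)" by (rule sum.cong) auto
    finally show ?thesis using assms(1) by (simp add: sum.inter_filter)
  qed
  also have "(\<Sum>a\<in>{a\<in>A. P a}. g a) \<le> card {a\<in>A. P a} * M"
    using assms(2) by (intro sum_bounded_above) auto
  also have "(\<Sum>a\<in>{a\<in>A. \<not> P a}. g a) \<le> card {a\<in>A. \<not> P a} * (\<theta>/2*M)"
    by (intro sum_bounded_above) (auto simp: P_def)
  also have "card {a\<in>A. \<not> P a} * (\<theta>/2*M) \<le> card A * (\<theta>/2*M)"
    using assms by (intro mult_right_mono) (auto intro!: card_mono)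
  finally have "\<theta> * M * card A \<le> card {a\<in>A. P a} * M + card A * (\<theta>/2*M)"
    using assms(5) by linarith
  hence "(\<theta>/2 * card A) * M \<le> card {a\<in>A. P a} * M" by (simp add: algebra_simps)
  thus ?thesis using assms(4) unfolding P_def by simp
qed

lemma pigeon:
  assumes "finite A" "finite B" "f ` A \<subseteq> B" "B \<noteq> {}"
  shows "\<exists>b\<in>B. real (card A) \<le> real (card B) * card {a\<in>A. f a = b}"
proof -
  define g where "g b = card {a\<in>A. f a = b}" for b
  have AU: "A = (\<Union>b\<in>B. {a\<in>A. f a = b})" using assms(3) by auto
  have "card A = card (\<Union>b\<in>B. {a\<in>A. f a = b})" using AU by simp
  also have "\<dots> = (\<Sum>b\<in>B. card {a\<in>A. f a = b})"
    by (rule card_UN_disjoint) (use assms in auto)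
  finally have cA: "card A = (\<Sum>b\<in>B. g b)" unfolding g_def .
  have "Max (g ` B) \<in> g ` B" using assms by (intro Max_in) auto
  then obtain b where b: "b \<in> B" "g b = Max (g ` B)" by auto
  have le: "\<And>b'. b'\<in>B \<Longrightarrow> g b' \<le> g b" using b assms by simp
  have "(\<Sum>b\<in>B. g b) \<le> card B * g b" using sum_bounded_above[of B g "g b"] le by simp
  hence "real (card A) \<le> real (card B) * real (g b)" using cA
    by (metis of_nat_le_iff of_nat_mult)
  thus ?thesis using b(1) unfolding g_def by blast
qed


lemma kst:
  fixes L :: "('a \<times> 'b) set" and \<beta> :: real
  assumes fin: "finite X" "finite Y" and LXY: "L \<subseteq> X \<times> Y" and cY: "card Y = n"
   and Xh: "Xh \<subseteq> X" "\<beta> * n \<le> card Xh"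
   and deg: "\<And>x. x \<in> Xh \<Longrightarrow> \<beta> * n \<le> card {y. (x,y) \<in> L}"
   and t: "1 \<le> t" "real t \<le> \<beta> * n" and key: "real t \<le> \<beta>*n*((\<beta>*n - t)/n)^t"
  shows "\<exists>X' Y'. X' \<subseteq> X \<and> Y' \<subseteq> Y \<and> card X' = t \<and> card Y' = t \<and> X' \<times> Y' \<subseteq> L"
proof -
  define N where "N x = {y. (x,y) \<in> L}" for x
  have NY: "N x \<subseteq> Y" for x using LXY by (auto simp: N_def)
  have finN: "finite (N x)" for x using NY fin finite_subset by blast
  have cN: "card (N x) \<le> n" for x using card_mono[OF fin(2) NY] cY by simp
  have finXh: "finite Xh" using Xh fin finite_subset by blast
  have n0: "0 < n" using t by (cases "n = 0") auto
  define k where "k = nat \<lceil>\<beta> * n\<rceil>"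
  have tk: "t \<le> k" using t unfolding k_def by linarith
  have kN: "k \<le> card (N x)" if "x \<in> Xh" for x
    using deg[OF that] unfolding k_def N_def by linarith
  have "card Xh \<noteq> 0" using Xh(2) t by linarith
  then obtain x0 where "x0 \<in> Xh" using card.empty by (metis all_not_in_conv)
  hence kn: "k \<le> n" using kN cN order_trans by blast
  have kb: "\<beta> * n \<le> real k" unfolding k_def by linarith
  define T where "T = {S. S \<subseteq> Y \<and> card S = t}"
  have finT: "finite T" unfolding T_def using fin(2) by auto
  have cT: "card T = n choose t" unfolding T_def using n_subsets[OF fin(2)] cY by simp
  have cTpos: "0 < card T" unfolding cT using tk kn by simp
  define f where "f S = card {x\<in>Xh. S \<subseteq> N x}" for S
  have swap: "(\<Sum>S\<in>T. f S) = (\<Sum>x\<in>Xh. card {S\<in>T. S \<subseteq> N x})"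
  proof -
    have "(\<Sum>S\<in>T. f S) = (\<Sum>S\<in>T. \<Sum>x\<in>Xh. if S \<subseteq> N x then 1 else 0)"
      unfolding f_def using finXh by (simp add: sum.inter_filter[symmetric])
    also have "\<dots> = (\<Sum>x\<in>Xh. \<Sum>S\<in>T. if S \<subseteq> N x then 1 else 0)" by (rule sum.swap)
    also have "\<dots> = (\<Sum>x\<in>Xh. card {S\<in>T. S \<subseteq> N x})"
      using finT by (simp add: sum.inter_filter[symmetric])
    finally show ?thesis .
  qed
  have cx: "card {S\<in>T. S \<subseteq> N x} = card (N x) choose t" for x
  proof -
    have "{S\<in>T. S \<subseteq> N x} = {S. S \<subseteq> N x \<and> card S = t}" using NY[of x] unfolding T_def by auto
    thus ?thesis using n_subsets[OF finN] by simp
  qed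
  have "card Xh * (k choose t) \<le> (\<Sum>x\<in>Xh. card {S\<in>T. S \<subseteq> N x})"
    using sum_bounded_below[of Xh "k choose t" "\<lambda>x. card {S\<in>T. S \<subseteq> N x}"] cx kN
    by (simp add: binomial_right_mono)
  hence sumge: "real (card Xh) * real (k choose t) \<le> real (\<Sum>S\<in>T. f S)"
    unfolding swap by (metis of_nat_le_iff of_nat_mult)
  have bpos: "0 \<le> \<beta> * n - t" using t by simp
  have "real t * real (n choose t) \<le> \<beta>*n*((\<beta>*n - t)/n)^t * real (n choose t)"
    using key by (intro mult_right_mono) auto
  also have "\<dots> \<le> \<beta>*n*(((real k - t)/n)^t * real (n choose t))"
  proof -
    have "((\<beta>*n - t)/n)^t \<le> ((real k - t)/n)^t"
      using bpos kb by (intro power_mono divide_right_mono) auto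
    hence "(\<beta>*n) * (((\<beta>*n - t)/n)^t * real (n choose t)) \<le> (\<beta>*n) * (((real k - t)/n)^t * real (n choose t))"
      using t by (intro mult_left_mono mult_right_mono) auto
    thus ?thesis by (simp add: mult.assoc)
  qed
  also have "\<dots> \<le> \<beta>*n * real (k choose t)"
    using binom_ratio[OF tk kn n0] t by (intro mult_left_mono) auto
  also have "\<dots> \<le> real (card Xh) * real (k choose t)"
    using Xh(2) by (intro mult_right_mono) auto
  finally have A: "real t * real (card T) \<le> real (\<Sum>S\<in>T. f S)" using sumge cT by simp
  have "\<exists>S\<in>T. t \<le> f S"
  proof (rule ccontr)
    assume "\<not> ?thesis"
    hence "\<And>S. S \<in> T \<Longrightarrow> f S \<le> t - 1" by force
    hence "(\<Sum>S\<in>T. f S) \<le> card T * (t - 1)" using sum_bounded_above[of T f "t - 1"] by simp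
    hence "real (\<Sum>S\<in>T. f S) \<le> real (card T) * (real t - 1)" using t
      by (metis of_nat_1 of_nat_diff of_nat_le_iff of_nat_mult)
    thus False using A cTpos by (simp add: algebra_simps)
  qed
  then obtain S where S: "S \<in> T" "t \<le> f S" by blast
  then obtain X' where X': "X' \<subseteq> {x\<in>Xh. S \<subseteq> N x}" "card X' = t"
    unfolding f_def by (meson obtain_subset_with_card_n)
  show ?thesis
  proof (intro exI conjI)
    show "X' \<subseteq> X" using X' Xh by auto
    show "S \<subseteq> Y" "card S = t" using S unfolding T_def by auto
    show "card X' = t" by fact
    show "X' \<times> S \<subseteq> L" using X' unfolding N_def by auto
  qed
qed


lemma ln2_gt_half: "1/2 < ln (2::real)"
proof -
  have "exp (1/2::real) * exp (1/2) = exp 1" by (simp add: exp_add[symmetric])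
  also have "\<dots> < 4" using exp_le by simp
  finally have e4: "exp (1/2::real) * exp (1/2) < 4" .
  have "exp (1/2::real) < 2"
  proof (rule ccontr)
    assume "\<not> exp (1/2::real) < 2"
    hence "2 \<le> exp (1/2::real)" by simp
    hence "2*2 \<le> exp (1/2::real) * exp (1/2)" by (intro mult_mono) auto
    thus False using e4 by simp
  qed
  thus ?thesis using ln_less_cancel_iff[of "exp(1/2)" 2] by simp 
qed

lemma delta_pos:
  fixes \<beta> :: real assumes "0 < \<beta>" "\<beta> \<le> 1/4"
  shows "0 < 1 + \<beta> * log 2 \<beta>"
proof -
  define s where "s = sqrt \<beta>"
  have "sqrt \<beta> \<le> sqrt (1/4)" using assms by (intro real_sqrt_le_mono)
  also have "sqrt (1/4) = (1/2::real)" by (simp add: real_sqrt_divide)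
  finally have s3: "s \<le> 1/2" unfolding s_def .
  have s: "0 < s" "s * s = \<beta>" "s \<le> 1/2" using assms s3 unfolding s_def by auto
  have lb: "ln \<beta> = 2*ln s" using s ln_mult[of s s] by simp
  have "ln (1/\<beta>) = 2 * ln (1/s)" using s lb assms by (simp add: ln_div)
  also have "\<dots> \<le> 2 * (1/s - 1)" using s ln_le_minus_one[of "1/s"] by simp
  finally have "\<beta> * ln (1/\<beta>) \<le> \<beta> * (2 * (1/s - 1))" using assms by (intro mult_left_mono) auto
  also have "\<dots> = 2*s - 2*s*s" unfolding s(2)[symmetric] using s(1) by (simp add: field_simps)
  also have "\<dots> \<le> 1/2"
  proof -
    have "0 \<le> (s - 1/2)^2" by simp
    moreover have "(s-1/2)^2 = s*s - s + 1/4" by (simp add: power2_eq_square algebra_simps)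
    ultimately show ?thesis by linarith
  qed
  finally have "- (\<beta> * ln \<beta>) \<le> 1/2" using assms by (simp add: ln_div)
  hence "- (\<beta> * ln \<beta>) < ln 2" using ln2_gt_half by linarith
  hence "-1 < \<beta> * ln \<beta> / ln 2" by (simp add: field_simps)
  thus ?thesis by (simp add: log_def)
qed

lemma analytic:
  fixes \<beta> x \<delta> :: real and t :: nat
  assumes b: "0<\<beta>" "\<beta> \<le> 1/4" and x: "2 \<le> x" and t: "\<beta>*log 2 x \<le> real t" "real t \<le> \<beta>*log 2 x + 1"
    and A: "2*(\<beta>*log 2 x + 1)^2 \<le> \<beta>*x" and B: "\<beta>*log 2 x + 1 \<le> \<beta>^2/2 * x powr \<delta>"
    and d: "\<delta> = 1 + \<beta>*log 2 \<beta>"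
  shows "real t \<le> \<beta>*x*((\<beta>*x - t)/x)^t"
proof -
  define u where "u = \<beta>*log 2 x + 1"
  have lx: "1 \<le> log 2 x" using x by simp
  have u1: "1 \<le> u" unfolding u_def using b lx by simp
  have tu: "real t \<le> u" using t unfolding u_def by simp
  have t0: "0 \<le> real t" by simp
  have "real t * real t \<le> u * u" using tu t0 by (intro mult_mono) auto
  also have uu: "u * u \<le> \<beta>*x/2" using A unfolding u_def by (simp add: power2_eq_square)
  finally have tt: "real t * real t \<le> \<beta>*x/2" .
  have bx: "0 < \<beta>*x" using b x by simp
  have "u \<le> u * u" using mult_right_mono[of 1 u u] u1 by simp
  hence tbx: "real t \<le> \<beta>*x" using tu bx uu by linarith
  define r where "r = real t / (\<beta>*x)"
  have r: "0 \<le> r" "r \<le> 1" using tbx bx unfolding r_def by auto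
  have eq: "(\<beta>*x - t)/x = \<beta> * (1 + (- r))" unfolding r_def using b x by (simp add: field_simps)
  have "1 + real t * (- r) \<le> (1 + (- r))^t" by (rule Bernoulli_inequality) (use r in simp)
  moreover have "real t * r \<le> 1/2" unfolding r_def using tt bx by (simp add: field_simps)
  ultimately have half: "1/2 \<le> (1 - r)^t" by simp
  have "\<beta> powr u \<le> \<beta> powr real t" using tu b by (intro powr_mono') auto
  hence pw: "\<beta> powr u \<le> \<beta>^t" using b by (simp add: powr_realpow)
  have "\<beta> powr u = \<beta> * \<beta> powr (\<beta>*log 2 x)" unfolding u_def using b by (simp add: powr_add)
  also have "\<beta> powr (\<beta>*log 2 x) = x powr (\<beta> * log 2 \<beta>)"
    using b x by (simp add: powr_def log_def)
  also have "x powr (\<beta> * log 2 \<beta>) = x powr \<delta> / x" using x d by (simp add: powr_add powr_diff)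
  finally have pu: "\<beta> powr u = \<beta> * (x powr \<delta> / x)" .
  have "u \<le> \<beta>^2/2 * x powr \<delta>" using B unfolding u_def .
  also have "\<dots> = \<beta> * x * (\<beta> powr u) * (1/2)" unfolding pu using x by (simp add: power2_eq_square)
  also have "\<dots> \<le> \<beta> * x * \<beta>^t * (1-r)^t"
    using pw half bx b x by (intro mult_mono) auto
  also have "\<dots> = \<beta>*x*((\<beta>*x - t)/x)^t" unfolding eq by (simp add: power_mult_distrib)
  finally show ?thesis using tu by simp
qed

lemma asym1:
  fixes c1 \<beta> \<delta> :: real
  shows "c1 > 0 \<Longrightarrow> \<beta> > 0 \<Longrightarrow> \<delta> > 0 \<Longrightarrow> eventually (\<lambda>m::nat. 2 \<le> c1 * real m \<and> \<beta> * log 2 (c1 * real m) + 1 \<le> \<beta> * (c1 * real m) \<and>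
   2 * (\<beta> * log 2 (c1 * real m) + 1)^2 \<le> \<beta> * (c1 * real m) \<and>
   \<beta> * log 2 (c1 * real m) + 1 \<le> \<beta>^2/2 * (c1 * real m) powr \<delta>) sequentially"
  apply (intro eventually_conj) by real_asymp+

lemma asym2: "(c::real) > 0 \<Longrightarrow> eventually (\<lambda>m::nat. real m \<le> c * 2^m) sequentially"
  by real_asymp

lemma nat_sq: assumes "n < (m::nat)" shows "n*n + m \<le> m^2"
proof -
  obtain k where k: "m = Suc k" using assms by (cases m) auto
  have "n \<le> k" using assms k by simp
  hence "n*n \<le> k*k" by (intro mult_le_mono) auto
  thus ?thesis unfolding k by (simp add: power2_eq_square)
qed

theorem lemma4:
  fixes c1 c2 \<eta> :: real
  assumes "0 < c1" "c1 < 1" "0 < c2" "c2 < 1" "0 < \<eta>" "\<eta> \<le> 1"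
  shows "\<exists>M::nat. \<forall>m\<ge>M. \<forall>(X::nat set) (Y::nat set) (Z::nat set) E.
           tripartite3 X Y Z E \<and>
           real (card X) = c1 * real m \<and> real (card Y) = c1 * real m \<and>
           real (card Z) \<ge> c2 * 2 ^ (m ^ 2) \<and>
           d3 X Y Z E \<ge> \<eta>
           \<longrightarrow> (\<exists>X' Y' Z'. X' \<subseteq> X \<and> Y' \<subseteq> Y \<and> Z' \<subseteq> Z \<and>
                  complete_sub X' Y' Z' E \<and>
                  card X' = card Y' \<and> card Y' = card Z' \<and>
                  real (card X') \<ge> \<eta> / 4 * log 2 (real (card X)))"
proof -
  define \<beta> where "\<beta> = \<eta>/4"
  define \<delta> where "\<delta> = 1 + \<beta> * log 2 \<beta>"
  have b: "0 < \<beta>" "\<beta> \<le> 1/4" using assms by (auto simp: \<beta>_def)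
  have d: "0 < \<delta>" using delta_pos[OF b] \<delta>_def by simp
  have c: "0 < \<eta>*c2/2" using assms by simp
  obtain M where M: "\<And>m. m \<ge> M \<Longrightarrow> (2 \<le> c1 * real m \<and> \<beta> * log 2 (c1 * real m) + 1 \<le> \<beta> * (c1 * real m) \<and>
   2 * (\<beta> * log 2 (c1 * real m) + 1)^2 \<le> \<beta> * (c1 * real m) \<and>
   \<beta> * log 2 (c1 * real m) + 1 \<le> \<beta>^2/2 * (c1 * real m) powr \<delta>) \<and> real m \<le> \<eta>*c2/2 * 2^m"
    using eventually_conj[OF asym1[OF assms(1) b(1) d] asym2[OF c]]
    unfolding eventually_sequentially by blast
  show ?thesis
  proof (rule exI[of _ "max M 1"], intro allI impI)
    fix m X Y Z E
    assume m: "max M 1 \<le> m" and H: "tripartite3 X Y Z E \<and>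
           real (card X) = c1 * real m \<and> real (card Y) = c1 * real m \<and>
           real (card Z) \<ge> c2 * 2 ^ (m ^ 2) \<and> d3 X Y Z E \<ge> \<eta>"
    have finX: "finite X" and finY: "finite Y" and finZ: "finite Z" and EXYZ: "E \<subseteq> X \<times> Y \<times> Z"
      using H by (auto simp: tripartite3_def)
    define n where "n = card X"
    define x where "x = c1 * real m"
    have xn: "real n = x" using H by (simp add: n_def x_def)
    have cY: "card Y = n" using H by (simp add: n_def)
    have m1: "1 \<le> m" using m by simp
    from M[of m] m have Mm: "2 \<le> x" "\<beta> * log 2 x + 1 \<le> \<beta> * x"
       "2 * (\<beta> * log 2 x + 1)^2 \<le> \<beta> * x" "\<beta> * log 2 x + 1 \<le> \<beta>^2/2 * x powr \<delta>"
       "real m \<le> \<eta>*c2/2 * 2^m" unfolding x_def by auto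
    have nm: "n < m"
    proof -
      have "x < real m" unfolding x_def using assms m1 by simp
      thus ?thesis using xn by simp
    qed
    have npos: "0 < n" using xn Mm by simp
    define N where "N = card Z"
    have hN: "c2 * 2^(m^2) \<le> real N" using H by (simp add: N_def)
    have "0 < c2 * 2^(m^2)" using assms(3) by simp
    hence Npos: "0 < N" using hN by linarith
    have den: "0 < real n * real n * real N" using npos Npos by simp
    have hE: "\<eta> * (real n * real n) * real N \<le> real (card E)"
    proof -
      have d0: "\<eta> \<le> d3 X Y Z E" using H by blast
      have "\<eta> \<le> real (card E) / (real n * real n * real N)"
        using d0 unfolding d3_def n_def[symmetric] N_def[symmetric] cY .
      hence "\<eta> * (real n * real n * real N) \<le> real (card E)" using pos_le_divide_eq[OF den] by blast
      thus ?thesis by (simp add: mult.assoc)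
    qed
    define Lz where "Lz z = {(a,b). (a,b,z) \<in> E}" for z
    have LzXY: "Lz z \<subseteq> X \<times> Y" for z using EXYZ by (auto simp: Lz_def)
    have finLz: "finite (Lz z)" for z using LzXY[of z] finX finY finite_subset by blast
    have cLz: "card (Lz z) \<le> n * n" for z
      using card_mono[OF _ LzXY[of z]] finX finY by (simp add: card_cartesian_product n_def cY)
    have Eimg: "E = (\<lambda>(z,p). (fst p, snd p, z)) ` (SIGMA z:Z. Lz z)"
      using EXYZ by (force simp: Lz_def image_iff)
    have inj: "inj_on (\<lambda>(z,p). (fst p, snd p, z)) (SIGMA z:Z. Lz z)"
      by (auto simp: inj_on_def)
    have cardE: "card E = (\<Sum>z\<in>Z. card (Lz z))"
      using card_image[OF inj] finZ finLz Eimg by simp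
    define Zd where "Zd = {z\<in>Z. \<eta>/2*(real n*real n) \<le> real (card (Lz z))}"
    have Zd: "\<eta>/2 * real N \<le> real (card Zd)"
      unfolding Zd_def N_def
    proof (rule dense_part)
      show "finite Z" by fact
      show "real (card (Lz a)) \<le> real n * real n" for a using cLz[of a] by (metis of_nat_le_iff of_nat_mult)
      show "0 \<le> \<eta>" using assms by simp
      show "0 < real n * real n" using npos by simp
      show "\<eta> * (real n * real n) * real (card Z) \<le> (\<Sum>a\<in>Z. real (card (Lz a)))"
        using hE cardE N_def by simp
    qed
    have finZd: "finite Zd" using finZ unfolding Zd_def by simp
    obtain L0 where L0: "L0 \<in> Pow (X \<times> Y)"
      and LF: "real (card Zd) \<le> real (card (Pow (X \<times> Y))) * card {z\<in>Zd. Lz z = L0}"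
      using pigeon[of Zd "Pow (X \<times> Y)" Lz] finZd finX finY LzXY by auto
    define F where "F = {z\<in>Zd. Lz z = L0}"
    have cPow: "card (Pow (X \<times> Y)) = 2^(n*n)"
      using finX finY by (simp add: card_Pow card_cartesian_product n_def cY)
    define t where "t = nat \<lceil>\<beta> * log 2 x\<rceil>"
    have lx: "1 \<le> log 2 x" using Mm by simp
    have tl: "\<beta> * log 2 x \<le> real t" unfolding t_def by linarith
    have y0: "0 \<le> \<beta> * log 2 x" using b lx by simp
    have tu: "real t \<le> \<beta> * log 2 x + 1"
    proof -
      have "real t = real_of_int \<lceil>\<beta> * log 2 x\<rceil>" unfolding t_def using y0 by simp
      also have "\<dots> \<le> \<beta> * log 2 x + 1" by (rule of_int_ceiling_le_add_one)
      finally show ?thesis .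
    qed
    have "0 < \<beta> * log 2 x" using b lx by simp
    hence "0 < real t" using tl by linarith
    hence t1: "1 \<le> t" by simp
    have tm: "real t \<le> real m"
    proof -
      have "\<beta> * x \<le> x" using b Mm by simp
      thus ?thesis using tu Mm(2) nm xn by linarith
    qed
    have pw: "(2::real)^(n*n) * 2^m \<le> 2^(m^2)"
      using nat_sq[OF nm] by (simp add: power_add[symmetric])
    have "(2::real)^(n*n) * (\<eta>*c2/2 * 2^m) = \<eta>*c2/2 * ((2::real)^(n*n) * 2^m)" by simp
    also have "\<dots> \<le> \<eta>*c2/2 * 2^(m^2)" using pw c by (intro mult_left_mono) auto
    also have "\<dots> = \<eta>/2 * (c2 * 2^(m^2))" by simp
    also have "\<dots> \<le> \<eta>/2 * real N" using hN assms by (intro mult_left_mono) auto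
    also have "\<dots> \<le> (2::real)^(n*n) * card F" using Zd LF cPow unfolding F_def by simp
    finally have "\<eta>*c2/2 * 2^m \<le> real (card F)" by simp
    hence tF: "t \<le> card F" using tm Mm(5) by linarith
    then obtain z0 where z0: "z0 \<in> F" using t1
      by (metis card.empty all_not_in_conv le_zero_eq not_one_le_zero)
    have L0eq: "Lz z0 = L0" and z0Zd: "z0 \<in> Zd" using z0 unfolding F_def by auto
    have L0big: "\<eta>/2 * (real n * real n) \<le> real (card L0)" using z0Zd L0eq unfolding Zd_def by auto
    have L0XY: "L0 \<subseteq> X \<times> Y" using L0 by simp
    define Xh where "Xh = {a\<in>X. \<eta>/2/2 * real n \<le> real (card {y. (a,y) \<in> L0})}"
    have nbY: "{y. (a,y) \<in> L0} \<subseteq> Y" for a using L0XY by auto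
    have L0sig: "L0 = (SIGMA a:X. {y. (a,y) \<in> L0})" using L0XY by auto
    have cL0: "card L0 = (\<Sum>a\<in>X. card {y. (a,y) \<in> L0})"
    proof -
      have fn: "\<forall>a\<in>X. finite {y. (a,y) \<in> L0}" using finY nbY finite_subset by blast
      have "card L0 = card (SIGMA a:X. {y. (a,y) \<in> L0})" using L0sig by simp
      also have "\<dots> = (\<Sum>a\<in>X. card {y. (a,y) \<in> L0})" using finX fn by (rule card_SigmaI)
      finally show ?thesis .
    qed
    have Xh: "\<eta>/2/2 * real (card X) \<le> real (card Xh)"
      unfolding Xh_def
    proof (rule dense_part)
      show "finite X" by fact
      show "real (card {y. (a,y) \<in> L0}) \<le> real n" for a
        using card_mono[OF finY nbY[of a]] cY by simp
      show "0 \<le> \<eta>/2" using assms by simp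
      show "0 < real n" using npos by simp
      show "\<eta>/2 * real n * real (card X) \<le> (\<Sum>a\<in>X. real (card {y. (a,y) \<in> L0}))"
        using L0big cL0 n_def by (simp add: mult.assoc)
    qed
    have bb: "\<eta>/2/2 = \<beta>" unfolding \<beta>_def by simp
    have key: "real t \<le> \<beta>*x*((\<beta>*x - t)/x)^t"
      by (rule analytic[OF b Mm(1) tl tu Mm(3) Mm(4) \<delta>_def])
    obtain X' Y' where XY: "X' \<subseteq> X" "Y' \<subseteq> Y" "card X' = t" "card Y' = t" "X' \<times> Y' \<subseteq> L0"
    proof -
      have "\<exists>X' Y'. X' \<subseteq> X \<and> Y' \<subseteq> Y \<and> card X' = t \<and> card Y' = t \<and> X' \<times> Y' \<subseteq> L0"
      proof (rule kst[OF finX finY L0XY cY])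
        show "Xh \<subseteq> X" unfolding Xh_def by auto
        show "\<beta> * real n \<le> real (card Xh)" using Xh bb n_def by simp
        show "\<beta> * real n \<le> real (card {y. (a, y) \<in> L0})" if "a \<in> Xh" for a
          using that bb unfolding Xh_def by auto
        show "1 \<le> t" by fact
        show "real t \<le> \<beta> * real n" using tu Mm(2) xn by simp
        show "real t \<le> \<beta> * real n * ((\<beta> * real n - real t) / real n) ^ t" using key xn by simp
      qed
      thus ?thesis using that by blast
    qed
    obtain Z' where Z': "Z' \<subseteq> F" "card Z' = t" using tF by (meson obtain_subset_with_card_n)
    show "\<exists>X' Y' Z'. X' \<subseteq> X \<and> Y' \<subseteq> Y \<and> Z' \<subseteq> Z \<and>
                  complete_sub X' Y' Z' E \<and>
                  card X' = card Y' \<and> card Y' = card Z' \<and>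
                  real (card X') \<ge> \<eta> / 4 * log 2 (real (card X))"
    proof (intro exI conjI)
      show "X' \<subseteq> X" "Y' \<subseteq> Y" by (fact XY)+
      show "Z' \<subseteq> Z" using Z' unfolding F_def Zd_def by auto
      show "complete_sub X' Y' Z' E" unfolding complete_sub_def
      proof (clarify)
        fix a b z assume "a \<in> X'" "b \<in> Y'" "z \<in> Z'"
        hence "(a,b) \<in> Lz z" using XY(5) Z' unfolding F_def by auto
        thus "(a,b,z) \<in> E" unfolding Lz_def by simp
      qed
      show "card X' = card Y'" "card Y' = card Z'" using XY Z' by auto
      show "\<eta> / 4 * log 2 (real (card X)) \<le> real (card X')"
        using tl XY(3) xn unfolding \<beta>_def n_def by simp
    qed
  qed
qed

end
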